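(* Let $(V,\nu)$ and $(W,\mu)$ be strongly complete PN-spaces and let $T:V\to W$ be a linear operator that is continuous with respect to the strong topologies, i.e. $T\in B(V,W)$. If $T$ is surjective, then $T$ is an open mapping: for every strongly open set $U\subseteq V$, the set $T(U)$ is strongly open in $W$.
   Context: A distance distribution function is a map $F:[-\infty,+\infty]\to[0,1]$ that is nondecreasing, left-continuous on $\mathbb{R}$, with $F(-\infty)=0$, $F(+\infty)=1$ and $F(0)=0$; the set of these is $\Delta^+$. $\mathcal{D}^+\subseteq\Delta^+$ denotes the proper ones, i.e. those with $\lim_{x\to+\infty}F(x)=1$. $H_0\in\Delta^+$ is $H_0(x)=0$ for $x\le 0$ and $H_0(x)=1$ for $x>0$. For $F,G\in\Delta^+$ let $\tau_M(F,G)(x)=\sup\{\min(F(s),G(t)) : s+t=x\}$. In this paper a PN-space $(V,\nu)$ is a real vector space $V$ with a map $\nu:V\to\Delta^+$, $p\mapsto\nu_p$, such that for all $p,q\in V$: $\nu_p=H_0$ iff $p=0$; $\nu_{p+q}\ge\tau_M(\nu_p,\nu_q)$ pointwise; and $\nu_{\alpha p}(x)=\nu_p(x/|\alpha|)$ for all real $\alpha\neq0$ and $x\ge 0$. Standing assumption: $\nu_p\in\mathcal{D}^+$ for every $p\in V$. For $x\in V$ and $w\in(0,1)$ put $\|x\|_w=\sup\{t\in\mathbb{R}:\nu_x(t)<w\}$; for each $w$ this is a norm on $V$, and $w\mapsto\|x\|_w$ is nondecreasing. For $p\in V$, $r>0$, $w\in(0,1)$ put $B_w(p;r)=\{x\in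 V:\|x-p\|_w<r\}$. The strong topology on $V$ is generated by the neighbourhoods $N_p(t)=\{q\in V:\nu_{p-q}(t)>1-t\}$, $p\in V$, $t>0$; equivalently the family $\{B_w(p;r)\}$ is a basis for it. A sequence $(p_n)$ converges strongly to $p$ if for every $t>0$ one has $p_n\in N_p(t)$ for all large $n$; it is strongly Cauchy if for every $t>0$ there is $N$ with $\nu_{p_n-p_m}(t)>1-t$ for all $m,n>N$. $(V,\nu)$ is strongly complete if every strongly Cauchy sequence converges strongly. $B(V,W)$ denotes the set of linear operators $V\to W$ that are continuous for the strong topologies (equivalently, map bounded sets to bounded sets). *)

theory Defs
  imports "HOL-Analysis.Analysis"
begin

definition dist_distr :: "(ereal \<Rightarrow> real) \<Rightarrow> bool" where
  "dist_distr F \<longleftrightarrow>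
     (\<forall>x. 0 \<le> F x \<and> F x \<le> 1) \<and>
     mono F \<and>
     (\<forall>x::real. ((\<lambda>y. F (ereal y)) \<longlongrightarrow> F (ereal x)) (at_left x)) \<and>
     F (-\<infinity>) = 0 \<and> F \<infinity> = 1 \<and> F 0 = 0"

definition proper_dist_distr :: "(ereal \<Rightarrow> real) \<Rightarrow> bool" where
  "proper_dist_distr F \<longleftrightarrow> dist_distr F \<and> ((\<lambda>x. F (ereal x)) \<longlongrightarrow> 1) at_top"

definition H0 :: "ereal \<Rightarrow> real" where
  "H0 x = (if x \<le> 0 then 0 else 1)"

definition tauM :: "(ereal \<Rightarrow> real) \<Rightarrow> (ereal \<Rightarrow> real) \<Rightarrow> real \<Rightarrow> real" where
  "tauM F G x = Sup {min (F (ereal s)) (G (ereal t)) | s t. s + t = x}"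

text \<open>PN-space (with the standing assumption that every nu_p is proper).\<close>
definition PN_space :: "('a::real_vector \<Rightarrow> ereal \<Rightarrow> real) \<Rightarrow> bool" where
  "PN_space \<nu> \<longleftrightarrow>
     (\<forall>p. proper_dist_distr (\<nu> p)) \<and>
     (\<forall>p. \<nu> p = H0 \<longleftrightarrow> p = 0) \<and>
     (\<forall>p q. \<forall>x::real. \<nu> (p + q) (ereal x) \<ge> tauM (\<nu> p) (\<nu> q) x) \<and>
     (\<forall>p \<alpha> x. \<alpha> \<noteq> 0 \<and> x \<ge> (0::real) \<longrightarrow> \<nu> (\<alpha> *\<^sub>R p) (ereal x) = \<nu> p (ereal (x / \<bar>\<alpha>\<bar>)))"

definition strong_nbhd :: "('a::real_vector \<Rightarrow> ereal \<Rightarrow> real) \<Rightarrow> 'a \<Rightarrow> real \<Rightarrow> 'a set" where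
  "strong_nbhd \<nu> p t = {q. \<nu> (p - q) (ereal t) > 1 - t}"

definition strong_open :: "('a::real_vector \<Rightarrow> ereal \<Rightarrow> real) \<Rightarrow> 'a set \<Rightarrow> bool" where
  "strong_open \<nu> U \<longleftrightarrow> (\<forall>p\<in>U. \<exists>t>0. strong_nbhd \<nu> p t \<subseteq> U)"

definition strong_converges :: "('a::real_vector \<Rightarrow> ereal \<Rightarrow> real) \<Rightarrow> (nat \<Rightarrow> 'a) \<Rightarrow> 'a \<Rightarrow> bool" where
  "strong_converges \<nu> s p \<longleftrightarrow> (\<forall>t>0. \<exists>N. \<forall>n\<ge>N. s n \<in> strong_nbhd \<nu> p t)"

definition strong_Cauchy :: "('a::real_vector \<Rightarrow> ereal \<Rightarrow> real) \<Rightarrow> (nat \<Rightarrow> 'a) \<Rightarrow> bool" where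
  "strong_Cauchy \<nu> s \<longleftrightarrow> (\<forall>t>0. \<exists>N. \<forall>m>N. \<forall>n>N. \<nu> (s n - s m) (ereal t) > 1 - t)"

definition strongly_complete :: "('a::real_vector \<Rightarrow> ereal \<Rightarrow> real) \<Rightarrow> bool" where
  "strongly_complete \<nu> \<longleftrightarrow> (\<forall>s. strong_Cauchy \<nu> s \<longrightarrow> (\<exists>p. strong_converges \<nu> s p))"

definition strongly_continuous ::
  "('a::real_vector \<Rightarrow> ereal \<Rightarrow> real) \<Rightarrow> ('b::real_vector \<Rightarrow> ereal \<Rightarrow> real) \<Rightarrow> ('a \<Rightarrow> 'b) \<Rightarrow> bool" where
  "strongly_continuous \<nu> \<mu> T \<longleftrightarrow> (\<forall>U. strong_open \<mu> U \<longrightarrow> strong_open \<nu> (T -` U))"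

end

theory Submission imports Defs begin

definition rho :: "('a::real_vector \<Rightarrow> ereal \<Rightarrow> real) \<Rightarrow> 'a \<Rightarrow> real" where
  "rho \<nu> x = Inf {t. 0 < t \<and> \<nu> x (ereal t) > 1 - t}"

lemma nu_bounds:
  assumes "PN_space \<nu>" shows "0 \<le> \<nu> x z" "\<nu> x z \<le> 1"
  using assms unfolding PN_space_def proper_dist_distr_def dist_distr_def by auto

lemma nu_mono:
  assumes "PN_space \<nu>" "a \<le> b" shows "\<nu> x (ereal a) \<le> \<nu> x (ereal b)"
proof -
  have "mono (\<nu> x)" using assms unfolding PN_space_def proper_dist_distr_def dist_distr_def by auto
  then show ?thesis using assms(2) by (simp add: monoD)
qed

lemma nu_basic:
  assumes "PN_space \<nu>"
  shows "\<nu> x \<infinity> = 1" "\<nu> x (-\<infinity>) = 0" "\<nu> x 0 = 0" "mono (\<nu> x)"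
proof -
  have "dist_distr (\<nu> x)" using assms unfolding PN_space_def proper_dist_distr_def by blast
  then show "\<nu> x \<infinity> = 1" "\<nu> x (-\<infinity>) = 0" "\<nu> x 0 = 0" "mono (\<nu> x)"
    unfolding dist_distr_def by blast+
qed

lemma rho_set_ne:
  assumes "PN_space \<nu>" shows "2 \<in> {t. 0 < t \<and> \<nu> x (ereal t) > 1 - t}"
  using nu_bounds[OF assms, of x "ereal 2"] by auto

lemma rho_nonneg: "0 \<le> rho \<nu> x" if "PN_space \<nu>"
  unfolding rho_def
proof (rule cInf_greatest)
  show "{t. 0 < t \<and> \<nu> x (ereal t) > 1 - t} \<noteq> {}" using rho_set_ne[OF that, of x] by blast
qed auto

lemma rho_lt:
  assumes "PN_space \<nu>" "rho \<nu> x < t" shows "\<nu> x (ereal t) > 1 - t"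
proof -
  obtain s where s: "s \<in> {t. 0 < t \<and> \<nu> x (ereal t) > 1 - t}" "s < t"
    using cInf_lessD[of "{t. 0 < t \<and> \<nu> x (ereal t) > 1 - t}" t] rho_set_ne[OF assms(1)] assms(2)
    unfolding rho_def by blast
  then have "\<nu> x (ereal s) \<le> \<nu> x (ereal t)" using nu_mono[OF assms(1)] by auto
  then show ?thesis using s by auto
qed

lemma rho_le:
  assumes "0 < t" "\<nu> x (ereal t) > 1 - t" shows "rho \<nu> x \<le> t"
  unfolding rho_def using assms by (intro cInf_lower) (auto intro: bdd_belowI[where m=0])

lemma rho_triangle:
  assumes P: "PN_space \<nu>" shows "rho \<nu> (x + y) \<le> rho \<nu> x + rho \<nu> y"
proof (rule field_le_epsilon)
  fix e :: real assume e: "0 < e"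
  define a where "a = rho \<nu> x + e/2"
  define b where "b = rho \<nu> y + e/2"
  have a0: "a > 0" "b > 0" using rho_nonneg[OF P] e unfolding a_def b_def by (auto intro: add_nonneg_pos)
  have ha: "\<nu> x (ereal a) > 1 - a" using rho_lt[OF P] e unfolding a_def by auto
  have hb: "\<nu> y (ereal b) > 1 - b" using rho_lt[OF P] e unfolding b_def by auto
  have "min (\<nu> x (ereal a)) (\<nu> y (ereal b)) \<le> tauM (\<nu> x) (\<nu> y) (a + b)"
    unfolding tauM_def
    by (rule cSup_upper) (auto intro!: bdd_aboveI[where M=1] simp: nu_bounds[OF P] min_le_iff_disj)
  also have "\<dots> \<le> \<nu> (x + y) (ereal (a + b))" using P unfolding PN_space_def by blast
  finally have "\<nu> (x + y) (ereal (a + b)) > 1 - (a + b)" using ha hb a0 by linarith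
  then have "rho \<nu> (x + y) \<le> a + b" using a0 by (intro rho_le) auto
  then show "rho \<nu> (x + y) \<le> rho \<nu> x + rho \<nu> y + e" unfolding a_def b_def by simp
qed

lemma nu_scale:
  assumes P: "PN_space \<nu>" "\<alpha> \<noteq> 0" "0 \<le> t" shows "\<nu> (\<alpha> *\<^sub>R x) (ereal t) = \<nu> x (ereal (t / \<bar>\<alpha>\<bar>))"
  using assms unfolding PN_space_def by blast

lemma rho_scale_le:
  assumes P: "PN_space \<nu>" "\<bar>\<alpha>\<bar> \<le> 1" "\<alpha> \<noteq> 0" shows "rho \<nu> (\<alpha> *\<^sub>R x) \<le> rho \<nu> x"
  unfolding rho_def[of \<nu> x]
proof (rule cInf_greatest)
  show "{t. 0 < t \<and> \<nu> x (ereal t) > 1 - t} \<noteq> {}" using rho_set_ne[OF P(1)] by blast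
  fix t assume t: "t \<in> {t. 0 < t \<and> \<nu> x (ereal t) > 1 - t}"
  have "t \<le> t / \<bar>\<alpha>\<bar>" using t P by (simp add: le_divide_eq)
  then have "\<nu> x (ereal t) \<le> \<nu> (\<alpha> *\<^sub>R x) (ereal t)"
    using nu_scale[OF P(1) P(3), of t x] nu_mono[OF P(1)] t by auto
  then show "rho \<nu> (\<alpha> *\<^sub>R x) \<le> t" using t by (intro rho_le) auto
qed

lemma rho_minus:
  assumes P: "PN_space \<nu>" shows "rho \<nu> (- x) = rho \<nu> x"
proof -
  have "rho \<nu> ((-1) *\<^sub>R x) \<le> rho \<nu> x" "rho \<nu> ((-1) *\<^sub>R ((-1) *\<^sub>R x)) \<le> rho \<nu> ((-1) *\<^sub>R x)"
    by (rule rho_scale_le[OF P]; simp)+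
  then show ?thesis by simp
qed

lemma rho_commute:
  assumes P: "PN_space \<nu>" shows "rho \<nu> (x - y) = rho \<nu> (y - x)"
  using rho_minus[OF P, of "x - y"] by simp

lemma rho_zero:
  assumes P: "PN_space \<nu>" shows "rho \<nu> 0 = 0"
proof -
  have H: "\<nu> 0 = H0" using P unfolding PN_space_def by blast
  have *: "rho \<nu> 0 \<le> e" if "e > 0" for e
    using that by (intro rho_le) (auto simp: H H0_def)
  have "rho \<nu> 0 \<le> 0"
  proof (rule field_le_epsilon)
    fix e :: real assume "0 < e" then show "rho \<nu> 0 \<le> 0 + e" using * by simp
  qed
  then show ?thesis using rho_nonneg[OF P, of 0] by linarith
qed

lemma rho_eq0:
  assumes P: "PN_space \<nu>" and r: "rho \<nu> x = 0" shows "x = 0"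
proof -
  have "\<nu> x = H0"
  proof
    fix z show "\<nu> x z = H0 z"
    proof (cases z)
      case (real r)
      show ?thesis
      proof (cases "r \<le> 0")
        case True
        have "\<nu> x (ereal r) \<le> \<nu> x (ereal 0)" using nu_mono[OF P True] .
        moreover have "\<nu> x 0 = 0" using nu_basic[OF P] by blast
        ultimately show ?thesis using nu_bounds[OF P, of x z] True real by (auto simp: H0_def zero_ereal_def)
      next
        case False
        have "\<nu> x (ereal r) \<ge> 1"
        proof (rule ccontr)
          assume "\<not> ?thesis"
          define e where "e = min r (1 - \<nu> x (ereal r)) / 2"
          have e: "e > 0" "e < r" "e < 1 - \<nu> x (ereal r)" using False \<open>\<not> 1 \<le> _\<close> unfolding e_def by auto
          have "\<nu> x (ereal e) > 1 - e" using rho_lt[OF P] r e by auto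
          moreover have "\<nu> x (ereal e) \<le> \<nu> x (ereal r)" using nu_mono[OF P] e by auto
          ultimately show False using e by linarith
        qed
        then show ?thesis using nu_bounds[OF P, of x z] False real by (auto simp: H0_def)
      qed
    next
      case PInf then show ?thesis using nu_basic[OF P, of x] by (simp add: H0_def)
    next
      case MInf then show ?thesis using nu_basic[OF P, of x] by (simp add: H0_def)
    qed
  qed
  then show ?thesis using P unfolding PN_space_def by blast
qed

lemma rho_sum:
  assumes P: "PN_space \<nu>" shows "rho \<nu> (\<Sum>i\<in>A. f i) \<le> (\<Sum>i\<in>A. rho \<nu> (f i))"
proof (induction A rule: infinite_finite_induct)
  case (infinite A) then show ?case by (simp add: rho_zero[OF P])
next
  case empty then show ?case by (simp add: rho_zero[OF P])
next
  case (insert x F)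
  then show ?case using rho_triangle[OF P, of "f x" "sum f F"] by simp
qed

lemma rho_nat_scale:
  assumes P: "PN_space \<nu>" shows "rho \<nu> (real k *\<^sub>R x) \<le> real k * rho \<nu> x"
proof (induction k)
  case 0 then show ?case by (simp add: rho_zero[OF P])
next
  case (Suc k)
  have "rho \<nu> (real (Suc k) *\<^sub>R x) = rho \<nu> (x + real k *\<^sub>R x)" by (simp add: algebra_simps)
  also have "\<dots> \<le> rho \<nu> x + rho \<nu> (real k *\<^sub>R x)" by (rule rho_triangle[OF P])
  finally show ?case using Suc by (simp add: algebra_simps)
qed

lemma rho_inv_scale:
  assumes P: "PN_space \<nu>" and "c \<ge> 1" shows "rho \<nu> ((1 / c) *\<^sub>R x) \<le> rho \<nu> x"
  using rho_scale_le[OF P, of "1/c" x] assms by auto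

lemma rho_absorb:
  assumes P: "PN_space \<nu>" and r: "r > 0" shows "\<exists>n. rho \<nu> ((1 / real (Suc n)) *\<^sub>R x) < r"
proof -
  define r' where "r' = min r 1 / 2"
  have r': "r' > 0" "r' < r" "r' < 1" using r unfolding r'_def by auto
  have "((\<lambda>t. \<nu> x (ereal t)) \<longlongrightarrow> 1) at_top"
    using P unfolding PN_space_def proper_dist_distr_def by blast
  then have "eventually (\<lambda>t. 1 - r' < \<nu> x (ereal t)) at_top"
    using r' by (intro order_tendstoD(1)) auto
  then obtain N where N: "\<And>t. t \<ge> N \<Longrightarrow> 1 - r' < \<nu> x (ereal t)"
    by (auto simp: eventually_at_top_linorder)
  obtain n :: nat where n: "N / r' < n" using reals_Archimedean2 by blast
  have "N / r' < real (Suc n)" using n by simp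
  then have "N < real (Suc n) * r'" using r' by (simp add: divide_less_eq)
  then have "N \<le> r' / \<bar>1 / real (Suc n)\<bar>" by (simp add: mult.commute)
  then have "1 - r' < \<nu> x (ereal (r' / \<bar>1 / real (Suc n)\<bar>))" by (rule N)
  moreover have "\<nu> ((1 / real (Suc n)) *\<^sub>R x) (ereal r') = \<nu> x (ereal (r' / \<bar>1 / real (Suc n)\<bar>))"
    using r' by (intro nu_scale[OF P]) auto
  ultimately have "1 - r' < \<nu> ((1 / real (Suc n)) *\<^sub>R x) (ereal r')" by simp
  then have "rho \<nu> ((1 / real (Suc n)) *\<^sub>R x) \<le> r'" using r' by (intro rho_le) auto
  then show ?thesis using r' by (intro exI[of _ n]) linarith
qed

lemma nbhd_rho:
  assumes "q \<in> strong_nbhd \<nu> p t" "t > 0" shows "rho \<nu> (p - q) \<le> t"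
  using assms unfolding strong_nbhd_def by (intro rho_le) auto

lemma rho_nbhd:
  assumes "PN_space \<nu>" "rho \<nu> (p - q) < t" shows "q \<in> strong_nbhd \<nu> p t"
  using rho_lt[OF assms] unfolding strong_nbhd_def by auto

lemma open_rho_ball:
  assumes P: "PN_space \<nu>" shows "strong_open \<nu> {y. rho \<nu> (c - y) < r}"
  unfolding strong_open_def
proof
  fix y assume y: "y \<in> {y. rho \<nu> (c - y) < r}"
  define t where "t = (r - rho \<nu> (c - y)) / 2"
  have t: "t > 0" using y unfolding t_def by auto
  have "strong_nbhd \<nu> y t \<subseteq> {y. rho \<nu> (c - y) < r}"
  proof
    fix q assume "q \<in> strong_nbhd \<nu> y t"
    then have "rho \<nu> (y - q) \<le> t" using t by (rule nbhd_rho)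
    moreover have "rho \<nu> (c - q) \<le> rho \<nu> (c - y) + rho \<nu> (y - q)"
      using rho_triangle[OF P, of "c - y" "y - q"] by simp
    ultimately show "q \<in> {y. rho \<nu> (c - y) < r}" using y unfolding t_def by auto
  qed
  then show "\<exists>t>0. strong_nbhd \<nu> y t \<subseteq> {y. rho \<nu> (c - y) < r}" using t by blast
qed

lemma rho_metric:
  assumes P: "PN_space \<nu>" shows "Metric_space UNIV (\<lambda>x y. rho \<nu> (x - y))"
  unfolding Metric_space_def
proof (intro allI conjI impI)
  fix x y z :: 'a
  show "0 \<le> rho \<nu> (x - y)" by (rule rho_nonneg[OF P])
  show "rho \<nu> (x - y) = rho \<nu> (y - x)" by (rule rho_commute[OF P])
  show "rho \<nu> (x - z) \<le> rho \<nu> (x - y) + rho \<nu> (y - z)"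
    using rho_triangle[OF P, of "x - y" "y - z"] by simp
  show "(rho \<nu> (x - y) = 0) = (x = y)"
  proof
    assume "rho \<nu> (x - y) = 0"
    then have "x - y = 0" by (rule rho_eq0[OF P])
    then show "x = y" by simp
  next
    assume "x = y" then show "rho \<nu> (x - y) = 0" by (simp add: rho_zero[OF P])
  qed
qed

lemma baire_pn:
  fixes \<mu> :: "'b::real_vector \<Rightarrow> ereal \<Rightarrow> real" and A :: "nat \<Rightarrow> 'b set"
  assumes P: "PN_space \<mu>" and C: "strongly_complete \<mu>" and U: "(\<Union>n. A n) = UNIV"
  shows "\<exists>n y \<epsilon>. \<epsilon> > 0 \<and> (\<forall>z. rho \<mu> (y - z) < \<epsilon> \<longrightarrow> (\<forall>\<delta>>0. \<exists>a\<in>A n. rho \<mu> (z - a) < \<delta>))"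
proof -
  interpret M: Metric_space UNIV "\<lambda>x y. rho \<mu> (x - y)" by (rule rho_metric[OF P])
  have comp: "M.mcomplete"
    unfolding M.mcomplete_def
  proof (intro allI impI)
    fix s assume "M.MCauchy s"
    then have cs: "\<forall>e>0. \<exists>N. \<forall>n n'. N \<le> n \<longrightarrow> N \<le> n' \<longrightarrow> rho \<mu> (s n - s n') < e"
      unfolding M.MCauchy_def by blast
    have "strong_Cauchy \<mu> s" unfolding strong_Cauchy_def
    proof (intro allI impI)
      fix t :: real assume "t > 0"
      then obtain N where N: "\<And>n n'. N \<le> n \<Longrightarrow> N \<le> n' \<Longrightarrow> rho \<mu> (s n - s n') < t" using cs by blast
      show "\<exists>N. \<forall>m>N. \<forall>n>N. 1 - t < \<mu> (s n - s m) (ereal t)"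
        by (rule exI[of _ N]) (auto intro!: rho_lt[OF P] N)
    qed
    then obtain p where p: "strong_converges \<mu> s p" using C unfolding strongly_complete_def by blast
    show "\<exists>x. limitin M.mtopology s x sequentially"
    proof (intro exI[of _ p])
      show "limitin M.mtopology s p sequentially"
        unfolding M.limitin_metric
      proof (intro conjI allI impI)
        fix e :: real assume e: "e > 0"
        then obtain N where N: "\<And>n. n \<ge> N \<Longrightarrow> s n \<in> strong_nbhd \<mu> p (e/2)"
          using p unfolding strong_converges_def by (meson half_gt_zero)
        have "rho \<mu> (s n - p) < e" if "n \<ge> N" for n
          using nbhd_rho[OF N[OF that]] e rho_commute[OF P, of p "s n"] by auto
        then show "\<forall>\<^sub>F n in sequentially. s n \<in> UNIV \<and> rho \<mu> (s n - p) < e"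
          by (auto simp: eventually_sequentially)
      qed auto
    qed
  qed
  show ?thesis
  proof (rule ccontr)
    assume H: "\<not> ?thesis"
    have empt: "M.mtopology interior_of (M.mtopology closure_of A n) = {}" for n
    proof (rule ccontr)
      assume "M.mtopology interior_of (M.mtopology closure_of A n) \<noteq> {}"
      then obtain y where y: "y \<in> M.mtopology interior_of (M.mtopology closure_of A n)" by blast
      moreover have "openin M.mtopology (M.mtopology interior_of (M.mtopology closure_of A n))"
        by (rule openin_interior_of)
      ultimately obtain r where r: "r > 0" "M.mball y r \<subseteq> M.mtopology interior_of (M.mtopology closure_of A n)"
        unfolding M.openin_mtopology by blast
      have "\<forall>z. rho \<mu> (y - z) < r \<longrightarrow> (\<forall>\<delta>>0. \<exists>a\<in>A n. rho \<mu> (z - a) < \<delta>)"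
      proof (rule allI, rule impI)
        fix z :: 'b assume "rho \<mu> (y - z) < r"
        then have "z \<in> M.mball y r" unfolding M.mball_def by simp
        then have "z \<in> M.mtopology closure_of A n" by (rule subsetD[OF interior_of_subset subsetD[OF r(2)]])
        then have "\<forall>\<delta>>0. \<exists>a\<in>A n. a \<in> M.mball z \<delta>" unfolding M.metric_closure_of by simp
        then show "\<forall>\<delta>>0. \<exists>a\<in>A n. rho \<mu> (z - a) < \<delta>" unfolding M.mball_def by simp
      qed
      then have "\<exists>n y \<epsilon>. \<epsilon> > 0 \<and> (\<forall>z. rho \<mu> (y - z) < \<epsilon> \<longrightarrow> (\<forall>\<delta>>0. \<exists>a\<in>A n. rho \<mu> (z - a) < \<delta>))"
        using r(1) by (intro exI[of _ n] exI[of _ y] exI[of _ r]) simp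
      with H show False by (rule notE)
    qed
    have "M.mtopology interior_of \<Union>(range (\<lambda>n. M.mtopology closure_of A n)) = {}"
    proof (rule M.metric_Baire_category_alt[OF comp])
      show "countable (range (\<lambda>n. M.mtopology closure_of A n))" by blast
      fix S assume "S \<in> range (\<lambda>n. M.mtopology closure_of A n)"
      then obtain n where Sn: "S = M.mtopology closure_of A n" by blast
      show "closedin M.mtopology S \<and> M.mtopology interior_of S = {}"
        using empt[of n] unfolding Sn by simp
    qed
    moreover have "\<Union>(range (\<lambda>n. M.mtopology closure_of A n)) = UNIV"
    proof -
      have sub: "A n \<subseteq> M.mtopology closure_of A n" for n
        by (rule closure_of_subset) simp
      show ?thesis
      proof (rule UNIV_eq_I[symmetric])
        fix x
        have "x \<in> (\<Union>n. A n)" unfolding U by (rule UNIV_I)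
        then obtain n where "x \<in> A n" by (rule UN_E)
        then have "x \<in> M.mtopology closure_of A n" using sub[of n] by (rule subsetD[rotated])
        then show "x \<in> \<Union>(range (\<lambda>n. M.mtopology closure_of A n))" by (rule UN_I[rotated]) simp
      qed
    qed
    moreover have "M.mtopology interior_of UNIV = UNIV"
      using interior_of_topspace[of M.mtopology] by simp
    ultimately show False by simp
  qed
qed

theorem theorem4p5:
  fixes \<nu> :: "'a::real_vector \<Rightarrow> ereal \<Rightarrow> real"
    and \<mu> :: "'b::real_vector \<Rightarrow> ereal \<Rightarrow> real"
    and T :: "'a \<Rightarrow> 'b"
  assumes "PN_space \<nu>" and "PN_space \<mu>"
    and "strongly_complete \<nu>" and "strongly_complete \<mu>"
    and "linear T" and "strongly_continuous \<nu> \<mu> T"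
    and "surj T"
  shows "\<forall>U. strong_open \<nu> U \<longrightarrow> strong_open \<mu> (T ` U)"
proof -
  note PV = assms(1) and PW = assms(2) and CV = assms(3) and CW = assms(4)
    and L = assms(5) and Cont = assms(6) and S = assms(7)
  have step1: "\<exists>\<eta>>0. \<forall>w. rho \<mu> w < \<eta> \<longrightarrow> (\<forall>\<delta>>0. \<exists>x. rho \<nu> x < r \<and> rho \<mu> (w - T x) < \<delta>)"
    if r: "r > 0" for r
  proof -
    define A where "A n = (\<lambda>x. T (real (Suc n) *\<^sub>R x)) ` {x. rho \<nu> x < r/2}" for n
    have UA: "(\<Union>n. A n) = UNIV"
    proof (rule UNIV_eq_I[symmetric])
      fix y
      obtain x0 where y: "y = T x0" using S by (metis surjD)
      obtain n where n: "rho \<nu> ((1 / real (Suc n)) *\<^sub>R x0) < r/2"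
        using rho_absorb[OF PV, of "r/2" x0] r by auto
      have "real (Suc n) *\<^sub>R ((1 / real (Suc n)) *\<^sub>R x0) = x0" by simp
      then have "y \<in> A n" unfolding A_def y using n
        by (intro image_eqI[of _ _ "(1 / real (Suc n)) *\<^sub>R x0"]) auto
      then show "y \<in> (\<Union>n. A n)" by (rule UN_I[rotated]) simp
    qed
    obtain n y \<epsilon> where \<epsilon>: "\<epsilon> > 0"
      and ball: "\<forall>z. rho \<mu> (y - z) < \<epsilon> \<longrightarrow> (\<forall>\<delta>>0. \<exists>a\<in>A n. rho \<mu> (z - a) < \<delta>)"
      using baire_pn[OF PW CW UA] by blast
    define m where "m = real (Suc n)"
    have m: "m \<ge> 1" unfolding m_def by simp
    define y1 where "y1 = (1/m) *\<^sub>R y"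
    have my1: "m *\<^sub>R y1 = y" unfolding y1_def using m by simp
    define \<eta> where "\<eta> = \<epsilon> / m"
    have \<eta>: "\<eta> > 0" using \<epsilon> m unfolding \<eta>_def by simp
    have cl: "\<exists>v. rho \<nu> v < r/2 \<and> rho \<mu> (z - T v) < \<delta>"
      if z: "rho \<mu> (y1 - z) < \<eta>" and \<delta>: "\<delta> > 0" for z \<delta>
    proof -
      have "rho \<mu> (y - m *\<^sub>R z) = rho \<mu> (m *\<^sub>R (y1 - z))" by (simp add: scaleR_diff_right my1)
      also have "\<dots> \<le> m * rho \<mu> (y1 - z)" unfolding m_def by (rule rho_nat_scale[OF PW])
      also have "\<dots> < m * \<eta>" using z m by simp
      also have "\<dots> = \<epsilon>" unfolding \<eta>_def using m by simp
      finally have "rho \<mu> (y - m *\<^sub>R z) < \<epsilon>" .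
      then obtain a where a: "a \<in> A n" "rho \<mu> (m *\<^sub>R z - a) < \<delta>" using ball \<delta> by blast
      then obtain v where v: "rho \<nu> v < r/2" "a = T (m *\<^sub>R v)" unfolding A_def m_def by blast
      have av: "a = m *\<^sub>R T v" using v(2) by (simp add: linear_scale[OF L])
      have "z - T v = (1/m) *\<^sub>R (m *\<^sub>R z - a)" using m unfolding av by (simp add: scaleR_diff_right)
      then have "rho \<mu> (z - T v) = rho \<mu> ((1/m) *\<^sub>R (m *\<^sub>R z - a))" by simp
      also have "\<dots> \<le> rho \<mu> (m *\<^sub>R z - a)" by (rule rho_inv_scale[OF PW m])
      finally show ?thesis using v a by (intro exI[of _ v]) simp
    qed
    have "\<forall>w. rho \<mu> w < \<eta> \<longrightarrow> (\<forall>\<delta>>0. \<exists>x. rho \<nu> x < r \<and> rho \<mu> (w - T x) < \<delta>)"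
    proof (intro allI impI)
      fix w :: 'b and \<delta> :: real assume w: "rho \<mu> w < \<eta>" and \<delta>: "\<delta> > 0"
      have "rho \<mu> (y1 - (y1 + w)) < \<eta>" using w rho_minus[OF PW, of w] by simp
      then obtain v1 where v1: "rho \<nu> v1 < r/2" "rho \<mu> ((y1 + w) - T v1) < \<delta>/2"
        using cl \<delta> by (meson half_gt_zero)
      have "rho \<mu> (y1 - y1) < \<eta>" using \<eta> by (simp add: rho_zero[OF PW])
      then obtain v2 where v2: "rho \<nu> v2 < r/2" "rho \<mu> (y1 - T v2) < \<delta>/2"
        using cl \<delta> by (meson half_gt_zero)
      have "rho \<nu> (v1 - v2) \<le> rho \<nu> v1 + rho \<nu> (- v2)" using rho_triangle[OF PV, of v1 "- v2"] by simp
      then have x: "rho \<nu> (v1 - v2) < r" using v1 v2 rho_minus[OF PV, of v2] by simp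
      have eq: "w - T (v1 - v2) = ((y1 + w) - T v1) + (- (y1 - T v2))"
        by (simp add: linear_diff[OF L] algebra_simps)
      have "rho \<mu> (w - T (v1 - v2)) \<le> rho \<mu> ((y1 + w) - T v1) + rho \<mu> (- (y1 - T v2))"
        unfolding eq by (rule rho_triangle[OF PW])
      then have "rho \<mu> (w - T (v1 - v2)) < \<delta>" using v1 v2 rho_minus[OF PW, of "y1 - T v2"] by simp
      with x show "\<exists>x. rho \<nu> x < r \<and> rho \<mu> (w - T x) < \<delta>" by blast
    qed
    then show ?thesis using \<eta> by blast
  qed
  have step2: "\<exists>\<eta>>0. \<forall>w. rho \<mu> w < \<eta> \<longrightarrow> (\<exists>x. rho \<nu> x < R \<and> T x = w)"
    if R: "R > 0" for R
  proof -
    define r where "r k = R / 4 * (1/2) ^ k" for k :: nat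
    have rpos: "r k > 0" for k unfolding r_def using R by simp
    have "\<forall>k. \<exists>\<eta>. \<eta> > 0 \<and> (\<forall>w. rho \<mu> w < \<eta> \<longrightarrow> (\<forall>\<delta>>0. \<exists>x. rho \<nu> x < r k \<and> rho \<mu> (w - T x) < \<delta>))"
      using step1 rpos by blast
    then obtain \<eta>' where \<eta>': "\<forall>k. \<eta>' k > 0 \<and> (\<forall>w. rho \<mu> w < \<eta>' k \<longrightarrow> (\<forall>\<delta>>0. \<exists>x. rho \<nu> x < r k \<and> rho \<mu> (w - T x) < \<delta>))"
      by (rule choice[THEN exE]) blast
    define \<eta> where "\<eta> k = min (\<eta>' k) (r k)" for k
    have \<eta>pos: "\<eta> k > 0" for k unfolding \<eta>_def using \<eta>' rpos by simp
    have \<eta>le: "\<eta> k \<le> r k" for k unfolding \<eta>_def by simp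
    have approx: "\<exists>x. rho \<nu> x < r k \<and> rho \<mu> (w - T x) < \<eta> (Suc k)" if "rho \<mu> w < \<eta> k" for k w
    proof -
      have "rho \<mu> w < \<eta>' k" using that unfolding \<eta>_def by simp
      then show ?thesis using \<eta>' \<eta>pos[of "Suc k"] by blast
    qed
    define f where "f k w = (SOME x. rho \<nu> x < r k \<and> rho \<mu> (w - T x) < \<eta> (Suc k))" for k w
    have f: "rho \<nu> (f k w) < r k \<and> rho \<mu> (w - T (f k w)) < \<eta> (Suc k)" if "rho \<mu> w < \<eta> k" for k w
      unfolding f_def by (rule someI_ex[OF approx[OF that]])
    have "\<forall>w. rho \<mu> w < \<eta> 0 \<longrightarrow> (\<exists>x. rho \<nu> x < R \<and> T x = w)"
    proof (intro allI impI)
      fix w assume w: "rho \<mu> w < \<eta> 0"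
      define e where "e = rec_nat w (\<lambda>k ek. ek - T (f k ek))"
      have e0: "e 0 = w" and eS: "e (Suc k) = e k - T (f k (e k))" for k unfolding e_def by simp_all
      have e\<eta>: "rho \<mu> (e k) < \<eta> k" for k
      proof (induction k)
        case 0 then show ?case using w by (simp add: e0)
      next
        case (Suc k) then show ?case using f[OF Suc] by (simp add: eS)
      qed
      define xs where "xs k = f k (e k)" for k
      have xsr: "rho \<nu> (xs k) < r k" for k using f[OF e\<eta>[of k]] unfolding xs_def by simp
      define s where "s n = (\<Sum>i<n. xs i)" for n
      have es: "e n = w - T (s n)" for n
      proof (induction n)
        case 0 then show ?case by (simp add: e0 s_def linear_0[OF L])
      next
        case (Suc n) then show ?case by (simp add: eS s_def xs_def linear_add[OF L] algebra_simps)
      qed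
      have sdiff: "rho \<nu> (s (m+j) - s m) \<le> R/2 * ((1/2)^m - (1/2)^(m+j))" for m j
      proof (induction j)
        case 0 then show ?case by (simp add: rho_zero[OF PV])
      next
        case (Suc j)
        have eq: "s (m + Suc j) - s m = (s (m+j) - s m) + xs (m+j)" by (simp add: s_def)
        have "rho \<nu> (s (m + Suc j) - s m) \<le> rho \<nu> (s (m+j) - s m) + rho \<nu> (xs (m+j))"
          unfolding eq by (rule rho_triangle[OF PV])
        also have "\<dots> \<le> R/2 * ((1/2)^m - (1/2)^(m+j)) + R/4 * (1/2)^(m+j)"
          using Suc xsr[of "m+j"] unfolding r_def by linarith
        also have "\<dots> = R/2 * ((1/2)^m - (1/2)^(m + Suc j))" by (simp add: algebra_simps)
        finally show ?case .
      qed
      have sdiff1: "rho \<nu> (s n - s m) \<le> R/2 * (1/2)^m" if "m \<le> n" for m n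
      proof -
        have "n = m + (n - m)" using that by simp
        then have "rho \<nu> (s n - s m) \<le> R/2 * ((1/2)^m - (1/2)^(m+(n-m)))" using sdiff[of m "n - m"] by simp
        also have "\<dots> \<le> R/2 * (1/2)^m" using R by simp
        finally show ?thesis .
      qed
      have sdiff2: "rho \<nu> (s n - s m) \<le> R/2 * (1/2)^N" if "N \<le> m" "N \<le> n" for m n N
      proof -
        have pm: "R/2 * (1/2::real)^m \<le> R/2 * (1/2)^N" "R/2 * (1/2::real)^n \<le> R/2 * (1/2)^N"
          using that R by (auto intro!: mult_left_mono power_decreasing)
        show ?thesis
        proof (cases "m \<le> n")
          case True then show ?thesis using sdiff1[OF True] pm by linarith
        next
          case False then show ?thesis using sdiff1[of n m] pm rho_commute[OF PV, of "s n" "s m"] by simp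
        qed
      qed
      have pow0: "((\<lambda>n. (1/2::real)^n) \<longlongrightarrow> 0) sequentially" by (rule LIMSEQ_realpow_zero) simp_all
      have powsmall: "\<exists>N. \<forall>n\<ge>N. (1/2::real)^n < c" if "c > 0" for c
      proof -
        have "eventually (\<lambda>n. (1/2::real)^n < c) sequentially" using order_tendstoD(2)[OF pow0 that] .
        then show ?thesis by (simp add: eventually_sequentially)
      qed
      have "strong_Cauchy \<nu> s" unfolding strong_Cauchy_def
      proof (intro allI impI)
        fix t :: real assume t: "t > 0"
        obtain N where N: "\<And>n. n \<ge> N \<Longrightarrow> (1/2::real)^n < t / (R/2)" using powsmall[of "t / (R/2)"] t R by auto
        have "R/2 * (1/2)^N < t" using N[of N] R by (simp add: field_simps)
        then have "1 - t < \<nu> (s n - s m) (ereal t)" if "m > N" "n > N" for m n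
          using sdiff2[of N m n] that by (intro rho_lt[OF PV]) simp
        then show "\<exists>N. \<forall>m>N. \<forall>n>N. 1 - t < \<nu> (s n - s m) (ereal t)" by blast
      qed
      then obtain p where p: "strong_converges \<nu> s p" using CV unfolding strongly_complete_def by blast
      have conv: "\<exists>N. \<forall>n\<ge>N. rho \<nu> (p - s n) \<le> t" if "t > 0" for t
        using p that nbhd_rho unfolding strong_converges_def by meson
      obtain N0 where N0: "\<And>n. n \<ge> N0 \<Longrightarrow> rho \<nu> (p - s n) \<le> R/4" using conv[of "R/4"] R by auto
      have "rho \<nu> p \<le> rho \<nu> (p - s N0) + rho \<nu> (s N0)" using rho_triangle[OF PV, of "p - s N0" "s N0"] by simp
      moreover have "rho \<nu> (s N0) \<le> R/2" using sdiff1[of 0 N0] by (simp add: s_def)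
      ultimately have pR: "rho \<nu> p < R" using N0[of N0] R by simp
      have small: "rho \<mu> (w - T p) \<le> \<epsilon>" if \<epsilon>: "\<epsilon> > 0" for \<epsilon>
      proof -
        let ?U = "{y. rho \<mu> (T p - y) < \<epsilon>/2}"
        have "strong_open \<nu> (T -` ?U)" using Cont open_rho_ball[OF PW] unfolding strongly_continuous_def by blast
        moreover have "p \<in> T -` ?U" using \<epsilon> by (simp add: rho_zero[OF PW])
        ultimately obtain t where t: "t > 0" "strong_nbhd \<nu> p t \<subseteq> T -` ?U" unfolding strong_open_def by blast
        obtain N1 where N1: "\<And>n. n \<ge> N1 \<Longrightarrow> rho \<nu> (p - s n) \<le> t/2" using conv[of "t/2"] t by auto
        obtain N2 where N2: "\<And>n. n \<ge> N2 \<Longrightarrow> (1/2::real)^n < (\<epsilon>/2) / (R/4)" using powsmall[of "(\<epsilon>/2) / (R/4)"] \<epsilon> R by auto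
        define n where "n = max N1 N2"
        have "rho \<nu> (p - s n) < t" using N1[of n] t unfolding n_def by simp
        then have "s n \<in> strong_nbhd \<nu> p t" by (rule rho_nbhd[OF PV])
        then have a1: "rho \<mu> (T (s n) - T p) < \<epsilon>/2" using t rho_commute[OF PW, of "T p" "T (s n)"] by auto
        have "r n < \<epsilon>/2" using N2[of n] R unfolding n_def r_def by (simp add: field_simps)
        then have a2: "rho \<mu> (w - T (s n)) < \<epsilon>/2" using e\<eta>[of n] \<eta>le[of n] es[of n] by simp
        have "rho \<mu> (w - T p) \<le> rho \<mu> (w - T (s n)) + rho \<mu> (T (s n) - T p)"
          using rho_triangle[OF PW, of "w - T (s n)" "T (s n) - T p"] by simp
        then show ?thesis using a1 a2 by simp
      qed
      have "rho \<mu> (w - T p) \<le> 0"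
      proof (rule field_le_epsilon)
        fix e :: real assume "0 < e" then show "rho \<mu> (w - T p) \<le> 0 + e" using small by simp
      qed
      then have "rho \<mu> (w - T p) = 0" using rho_nonneg[OF PW, of "w - T p"] by simp
      then have "T p = w" using rho_eq0[OF PW, of "w - T p"] by simp
      then show "\<exists>x. rho \<nu> x < R \<and> T x = w" using pR by blast
    qed
    then show ?thesis using \<eta>pos[of 0] by blast
  qed
  show ?thesis
  proof (intro allI impI)
    fix U assume U: "strong_open \<nu> U"
    show "strong_open \<mu> (T ` U)" unfolding strong_open_def
    proof
      fix y assume "y \<in> T ` U"
      then obtain p where p: "p \<in> U" "y = T p" by blast
      obtain t where t: "t > 0" "strong_nbhd \<nu> p t \<subseteq> U" using U p(1) unfolding strong_open_def by blast
      obtain \<eta> where \<eta>: "\<eta> > 0" "\<And>w. rho \<mu> w < \<eta> \<Longrightarrow> \<exists>x. rho \<nu> x < t \<and> T x = w"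
        using step2[OF t(1)] by blast
      have "strong_nbhd \<mu> y (\<eta>/2) \<subseteq> T ` U"
      proof
        fix q assume "q \<in> strong_nbhd \<mu> y (\<eta>/2)"
        then have "rho \<mu> (y - q) \<le> \<eta>/2" using \<eta> by (intro nbhd_rho) auto
        then obtain x where x: "rho \<nu> x < t" "T x = y - q" using \<eta> by force
        have "p - x \<in> strong_nbhd \<nu> p t" using x(1) by (intro rho_nbhd[OF PV]) simp
        then have "p - x \<in> U" using t(2) by blast
        moreover have "q = T (p - x)" using x(2) p(2) by (simp add: linear_diff[OF L])
        ultimately show "q \<in> T ` U" by blast
      qed
      then show "\<exists>t>0. strong_nbhd \<mu> y t \<subseteq> T ` U" using \<eta> by (intro exI[of _ "\<eta>/2"]) simp
    qed
  qed
qed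

end
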